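(* Let $0<\kappa_p<\kappa_s$ and $0<R'<R$. Then for all sufficiently large $n$ and $j=1,2$, \[ \Big|\frac{h_n^{(j)}(\kappa_pR)}{h_n^{(j)}(\kappa_pR')}-\frac{h_n^{(j)}(\kappa_sR)}{h_n^{(j)}(\kappa_sR')}\Big|\le\frac{14}{3}\,\frac{\kappa_s(\kappa_s-\kappa_p)}{n}\,R(R-R')\Big(\frac{R'}{R}\Big)^{n+1}. \]
   Context: $h_n^{(1)}$ and $h_n^{(2)}$ denote the spherical Hankel functions of the first and second kind of order $n$ (for real arguments $h_n^{(2)}=\overline{h_n^{(1)}}$). *)

theory Defs
  imports Complex_Main
begin

text \<open>Spherical Hankel functions of the first and second kind of integer order n,
  for real argument x > 0, via the standard closed form (DLMF 10.49.6):
  h_n^(1)(x) = (-i)^(n+1) e^(ix)/x * sum_(k=0..n) i^k (n+k)! / (k! (n-k)! (2x)^k),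
  and h_n^(2)(x) = conj(h_n^(1)(x)) for real x.\<close>

definition sph_hankel1 :: "nat \<Rightarrow> real \<Rightarrow> complex" where
  "sph_hankel1 n x =
     (- \<i>) ^ (n + 1) * exp (\<i> * complex_of_real x) / complex_of_real x *
     (\<Sum>k=0..n. \<i> ^ k * of_nat (fact (n + k)) /
        (of_nat (fact k * fact (n - k)) * (2 * complex_of_real x) ^ k))"

definition sph_hankel2 :: "nat \<Rightarrow> real \<Rightarrow> complex" where
  "sph_hankel2 n x = cnj (sph_hankel1 n x)"

definition sph_hankel :: "nat \<Rightarrow> nat \<Rightarrow> real \<Rightarrow> complex" where
  "sph_hankel j n x = (if j = 1 then sph_hankel1 n x else sph_hankel2 n x)"

end

theory Submission imports Defs "HOL-Analysis.Analysis" "HOL-Real_Asymp.Real_Asymp" begin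

definition A :: "nat \<Rightarrow> nat \<Rightarrow> real" where
  "A n m = (if m \<le> n then fact (2*n-m) * fact n / (fact (n-m) * fact (2*n)) else 0)"

lemma A0: "A n 0 = 1" by (simp add: A_def)

lemma A_rec: assumes "m < n"
  shows "A n (Suc m) = A n m * (real n - real m) / (2 * real n - real m)"
proof -
  have e1: "fact (2*n-m) = (2 * real n - real m) * (fact (2*n - Suc m) :: real)"
  proof -
    have "2*n-m = Suc (2*n - Suc m)" using assms by simp
    hence "(fact (2*n-m)::real) = of_nat (Suc (2*n - Suc m)) * fact (2*n - Suc m)"
      by (metis fact_Suc)
    moreover have "real (Suc (2*n - Suc m)) = 2 * real n - real m" using assms by (simp add: of_nat_diff)
    ultimately show ?thesis by simp
  qed
  have e2: "fact (n-m) = (real n - real m) * (fact (n - Suc m) :: real)"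
  proof -
    have "n-m = Suc (n - Suc m)" using assms by simp
    hence "(fact (n-m)::real) = of_nat (Suc (n - Suc m)) * fact (n - Suc m)"
      by (metis fact_Suc)
    moreover have "real (Suc (n - Suc m)) = real n - real m" using assms by (simp add: of_nat_diff)
    ultimately show ?thesis by simp
  qed
  have p1: "2 * real n - real m > 0" "real n - real m > 0" using assms by auto
  define Q :: real where "Q = fact (2*n - Suc m) * fact n / (fact (n - Suc m) * fact (2*n))"
  have q1: "A n (Suc m) = Q"
    using assms by (simp add: A_def Q_def)
  have "A n m = ((2 * real n - real m) * fact (2*n - Suc m)) * fact n / (((real n - real m) * fact (n - Suc m)) * fact (2*n))"
    using assms by (simp add: A_def e1 e2)
  also have "\<dots> = (2 * real n - real m) / (real n - real m) * Q" unfolding Q_def by (simp add: field_simps)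
  finally have q2: "A n m = (2 * real n - real m) / (real n - real m) * Q" .
  have gen: "\<And>u v Q::real. u > 0 \<Longrightarrow> v > 0 \<Longrightarrow> Q = u / v * Q * v / u" by simp
  show ?thesis unfolding q1 q2 by (rule gen[OF p1])
qed

lemma A_bounds: "m \<le> n \<Longrightarrow> 0 \<le> A n m \<and> A n m \<le> 1/2^m \<and> real n * (1/2^m - A n m) \<le> real m ^ 2 / 2^m"
proof (induction m)
  case 0 then show ?case by (simp add: A0)
next
  case (Suc m)
  hence mn: "m < n" by simp
  from Suc mn have IH: "0 \<le> A n m" "A n m \<le> 1/2^m" "real n * (1/2^m - A n m) \<le> real m ^ 2 / 2^m" by auto
  define N where "N = real n"
  define M where "M = real m"
  define r where "r = (N - M) / (2*N - M)"
  have MN: "M < N" "0 \<le> M" using mn by (auto simp: N_def M_def)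
  have r0: "0 \<le> r" using MN by (simp add: r_def)
  have rh: "r \<le> 1/2" using MN by (simp add: r_def field_simps)
  have rd: "N * (1/2 - r) \<le> M/2"
  proof -
    have "N * (1/2 - r) = N * M / (2 * (2*N - M))" using MN by (simp add: r_def field_simps)
    also have "\<dots> \<le> M/2" using MN by (simp add: field_simps mult_left_mono power2_eq_square)
    finally show ?thesis .
  qed
  have eq: "A n (Suc m) = A n m * r" using A_rec[OF mn] by (simp add: r_def N_def M_def)
  define a where "a = A n m"
  define p where "p = (1::real)/2^m"
  have pp: "p > 0" by (simp add: p_def)
  have a0: "0 \<le> a" "a \<le> p" "N * (p - a) \<le> M^2 * p" using IH by (auto simp: a_def p_def N_def M_def)
  have g1: "0 \<le> a * r" using a0 r0 by simp
  have g2: "a * r \<le> p / 2"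
  proof -
    have "a*r \<le> p*r" by (rule mult_right_mono[OF a0(2) r0])
    also have "\<dots> \<le> p * (1/2)" using rh pp by (intro mult_left_mono) auto
    finally show ?thesis by simp
  qed
  have "N * (p/2 - a*r) = N * (p - a) * r + p * (N * (1/2 - r))" by (simp add: algebra_simps)
  also have "\<dots> \<le> M^2 * p * (1/2) + p * (M/2)"
  proof (rule add_mono)
    have "N * (p - a) * r \<le> M^2 * p * r" by (rule mult_right_mono[OF a0(3) r0])
    also have "\<dots> \<le> M^2 * p * (1/2)" using rh pp by (intro mult_left_mono) auto
    finally show "N * (p - a) * r \<le> M^2 * p * (1/2)" .
    show "p * (N * (1/2 - r)) \<le> p * (M/2)" using rd pp by (intro mult_left_mono) auto
  qed
  also have "\<dots> \<le> (M+1)^2 * (p/2)" using pp MN by (simp add: power2_eq_square field_simps)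
  finally have g3: "N * (p/2 - a*r) \<le> (M+1)^2 * (p/2)" .
  have h1: "(1::real)/2^(Suc m) = p/2" by (simp add: p_def)
  have h2: "real (Suc m)^2/2^Suc m = (M+1)^2*(p/2)" by (simp add: p_def M_def add.commute mult.commute)
  show ?case unfolding h1 h2 eq using g1 g2 g3
    by (simp add: a_def N_def)
qed

lemma A_lim: "(\<lambda>n. real n * (A n m - 1/2^m)) \<longlonglongrightarrow> - (real m * (real m - 1) / (4 * 2^m))"
proof (induction m)
  case 0
  then show ?case by (simp add: A0)
next
  case (Suc m)
  define r where "r = (\<lambda>n. (real n - real m) / (2 * real n - real m))"
  have r1: "r \<longlonglongrightarrow> 1/2" unfolding r_def by real_asymp
  have r2: "(\<lambda>n. real n * (r n - 1/2)) \<longlonglongrightarrow> - real m / 4" unfolding r_def by real_asymp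
  have "(\<lambda>n. real n * (A n m - 1/2^m) * r n + (1/2^m) * (real n * (r n - 1/2)))
     \<longlonglongrightarrow> - (real m * (real m - 1) / (4 * 2^m)) * (1/2) + (1/2^m) * (- real m / 4)"
    by (intro tendsto_intros Suc r1 r2)
  also have "- (real m * (real m - 1) / (4 * 2^m)) * (1/2) + (1/2^m) * (- real m / 4)
     = - (real (Suc m) * (real (Suc m) - 1) / (4 * 2^(Suc m)))"
    by (simp add: field_simps) 
  finally have L: "(\<lambda>n. real n * (A n m - 1/2^m) * r n + (1/2^m) * (real n * (r n - 1/2)))
     \<longlonglongrightarrow> - (real (Suc m) * (real (Suc m) - 1) / (4 * 2^(Suc m)))" .
  show ?case
  proof (rule Lim_transform_eventually[OF L])
    show "\<forall>\<^sub>F n in sequentially. real n * (A n m - 1/2^m) * r n + (1/2^m) * (real n * (r n - 1/2))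
        = real n * (A n (Suc m) - 1/2^(Suc m))"
      using eventually_gt_at_top[of m]
    proof eventually_elim
      case (elim n)
      have "A n (Suc m) = A n m * r n" using A_rec[OF elim] by (simp add: r_def)
      then show ?case by (simp add: algebra_simps)
    qed
  qed
qed


definition cc :: "real \<Rightarrow> nat \<Rightarrow> complex" where
  "cc x m = (- 2 * \<i> * of_real x) ^ m / fact m"

definition P :: "nat \<Rightarrow> real \<Rightarrow> complex" where
  "P n x = (\<Sum>m\<le>n. cc x m * of_real (A n m))"

lemma sq_le_4pow: "real m ^ 2 \<le> 4 ^ m"
proof -
  have "real m \<le> 2^m" using less_exp[of m] by (metis of_nat_le_iff of_nat_numeral of_nat_power less_imp_le)
  hence "real m ^ 2 \<le> (2^m)^2" by (intro power_mono) auto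
  also have "((2::real)^m)^2 = (2^2)^m" by (simp only: power_mult[symmetric] mult.commute)
  also have "((2::real)^2)^m = 4^m" by simp
  finally show ?thesis .
qed

lemma nA_bound: "\<bar>real n * (A n m - 1/2^m)\<bar> \<le> real m ^ 2 / 2^m"
proof (cases "m \<le> n")
  case True
  have b: "0 \<le> A n m" "A n m \<le> 1/2^m" "real n * (1/2^m - A n m) \<le> real m ^ 2 / 2^m" using A_bounds[OF True] by auto
  have "real n * A n m \<le> real n * (1/2^m)" using b(2) by (intro mult_left_mono) auto
  hence "\<bar>real n * (A n m - 1/2^m)\<bar> = real n * (1/2^m - A n m)" by (simp add: algebra_simps)
  then show ?thesis using b(3) by simp
next
  case False
  hence A: "A n m = 0" by (simp add: A_def)
  have "real n \<le> real m ^ 2" using False by (simp add: power2_eq_square) (metis of_nat_le_iff le_square less_imp_le_nat not_le order_trans of_nat_mult)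
  then show ?thesis by (simp add: A divide_right_mono)
qed

lemma norm_cc: "norm (cc x m) = (2 * \<bar>x\<bar>) ^ m / fact m"
  by (simp add: cc_def norm_divide norm_power norm_mult)

lemma sums_mm1: "(\<lambda>m. z ^ m * of_nat m * (of_nat m - 1) / fact m) sums (z^2 * exp (z::complex))"
proof -
  let ?f = "\<lambda>m. z ^ m * of_nat m * (of_nat m - 1) / (fact m :: complex)"
  have "(\<lambda>m. z^2 * (z ^ m /\<^sub>R fact m)) sums (z^2 * exp z)"
    by (intro sums_mult exp_converges)
  moreover have "\<And>m. ?f (Suc (Suc m)) = z^2 * (z ^ m /\<^sub>R fact m)"
  proof -
    fix m
    have fs: "(fact (Suc (Suc m)) :: complex) = (of_nat (Suc (Suc m)) * of_nat (Suc m)) * fact m"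
      by (simp add: algebra_simps)
    have k: "(of_nat (Suc (Suc m)) * of_nat (Suc m) :: complex) \<noteq> 0" by (simp del: of_nat_Suc)
    have "?f (Suc (Suc m)) = (of_nat (Suc (Suc m)) * of_nat (Suc m)) * (z^2*z^m) / ((of_nat (Suc (Suc m)) * of_nat (Suc m)) * fact m)"
      unfolding fs by (simp add: algebra_simps power2_eq_square)
    also have "\<dots> = z^2*z^m / fact m" by (rule mult_divide_mult_cancel_left[OF k])
    finally show "?f (Suc (Suc m)) = z^2 * (z ^ m /\<^sub>R fact m)"
      by (simp add: scaleR_conv_of_real divide_inverse)
  qed
  ultimately have "(\<lambda>m. ?f (Suc (Suc m))) sums (z^2 * exp z)" by simp
  hence "(\<lambda>m. ?f (Suc m)) sums (z^2 * exp z + ?f (Suc 0))" by (subst (asm) sums_Suc_iff)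
  hence "?f sums (z^2 * exp z + ?f (Suc 0) + ?f 0)" by (subst (asm) sums_Suc_iff)
  thus ?thesis by simp
qed

lemma P_lim: "(\<lambda>n. of_nat n * (P n x - exp (- \<i> * of_real x))) \<longlonglongrightarrow> of_real (x^2/4) * exp (- \<i> * of_real x)"
proof -
  define a where "a = (\<lambda>m n. cc x m * of_real (real n * (A n m - 1/2^m)))"
  define b where "b = (\<lambda>m. cc x m * of_real (- (real m * (real m - 1) / (4 * 2^m))))"
  define M where "M = (\<lambda>m. (4 * \<bar>x\<bar>) ^ m / fact m :: real)"
  have lim: "\<And>m. (\<lambda>n. a m n) \<longlonglongrightarrow> b m"
    unfolding a_def b_def by (intro tendsto_intros A_lim)
  have bnd: "\<And>m n. norm (a m n) \<le> M m"
  proof -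
    fix m n
    have "norm (a m n) = (2 * \<bar>x\<bar>) ^ m / fact m * \<bar>real n * (A n m - 1/2^m)\<bar>"
      unfolding a_def norm_mult norm_of_real norm_cc ..
    also have "\<dots> \<le> (2 * \<bar>x\<bar>) ^ m / fact m * (real m ^ 2 / 2^m)"
      by (intro mult_left_mono nA_bound) auto
    also have "\<dots> = \<bar>x\<bar> ^ m / fact m * real m ^ 2"
      by (simp add: power_mult_distrib)
    also have "\<dots> \<le> \<bar>x\<bar> ^ m / fact m * 4 ^ m"
      by (intro mult_left_mono sq_le_4pow) auto
    also have "\<dots> = M m" by (simp add: M_def power_mult_distrib)
    finally show "norm (a m n) \<le> M m" .
  qed
  have sM: "summable M"
    using summable_exp[of "4 * \<bar>x\<bar>"] by (simp add: M_def field_simps)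
  have T: "(\<lambda>n. suminf (\<lambda>m. a m n)) \<longlonglongrightarrow> suminf b"
    using tannerys_theorem[of a b sequentially M] lim bnd sM by (auto simp: eventually_prod_sequentially)
  have sb: "b sums (of_real (x^2/4) * exp (- \<i> * of_real x))"
  proof -
    have S: "(\<lambda>m. (-1/4) * ((- \<i> * of_real x) ^ m * of_nat m * (of_nat m - 1) / fact m)) sums
          ((-1/4) * ((- \<i> * of_real x)^2 * exp (- \<i> * of_real x)))"
      by (intro sums_mult sums_mm1)
    have E: "\<And>m. (-1/4) * ((- \<i> * of_real x) ^ m * of_nat m * (of_nat m - 1) / fact m) = b m"
    proof -
      fix m
      have "(- 2 * \<i> * of_real x) ^ m = (2::complex)^m * (- \<i> * of_real x) ^ m"
        by (subst power_mult_distrib[symmetric]) (simp add: mult.assoc)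
      thus "(-1/4) * ((- \<i> * of_real x) ^ m * of_nat m * (of_nat m - 1) / fact m) = b m"
        by (simp add: b_def cc_def field_simps)
    qed
    have V: "(-1/4) * ((- \<i> * of_real x)^2 * exp (- \<i> * of_real x)) = of_real (x^2/4) * exp (- \<i> * of_real x)"
      by (simp add: power2_eq_square field_simps)
    have F: "(\<lambda>m. (-1/4) * ((- \<i> * of_real x) ^ m * of_nat m * (of_nat m - 1) / fact m)) = b"
      using E by (rule ext)
    show ?thesis using S unfolding F V .
  qed
  have sa: "\<And>n. (\<lambda>m. a m n) sums (of_nat n * (P n x - exp (- \<i> * of_real x)))"
  proof -
    fix n
    have s1: "(\<lambda>m. cc x m * of_real (A n m)) sums P n x"
      unfolding P_def by (rule sums_finite) (auto simp: A_def)
    have s2: "(\<lambda>m. cc x m * of_real (1/2^m)) sums exp (- \<i> * of_real x)"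
    proof -
      have "\<And>m. cc x m * of_real (1/2^m) = (- \<i> * of_real x) ^ m /\<^sub>R fact m"
      proof -
        fix m
        have "(- 2 * \<i> * of_real x) ^ m = (2::complex)^m * (- \<i> * of_real x) ^ m"
          by (subst power_mult_distrib[symmetric]) (simp add: mult.assoc)
        thus "cc x m * of_real (1/2^m) = (- \<i> * of_real x) ^ m /\<^sub>R fact m"
          by (simp add: cc_def scaleR_conv_of_real field_simps)
      qed
      thus ?thesis using exp_converges[of "- \<i> * of_real x"] by simp
    qed
    have "(\<lambda>m. of_nat n * (cc x m * of_real (A n m) - cc x m * of_real (1/2^m))) sums
          (of_nat n * (P n x - exp (- \<i> * of_real x)))"
      by (intro sums_mult sums_diff s1 s2)
    moreover have "\<And>m. of_nat n * (cc x m * of_real (A n m) - cc x m * of_real (1/2^m)) = a m n"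
      by (simp add: a_def algebra_simps)
    ultimately show "(\<lambda>m. a m n) sums (of_nat n * (P n x - exp (- \<i> * of_real x)))" by simp
  qed
  show ?thesis using T unfolding sums_unique[OF sa, symmetric] sums_unique[OF sb, symmetric] .
qed

definition G :: "nat \<Rightarrow> real \<Rightarrow> complex" where
  "G n x = exp (\<i> * of_real x) * P n x"

lemma G_lim: "(\<lambda>n. of_nat n * (G n x - 1)) \<longlonglongrightarrow> of_real (x^2/4)"
proof -
  have L: "(\<lambda>n. exp (\<i> * of_real x) * (of_nat n * (P n x - exp (- \<i> * of_real x)))) \<longlonglongrightarrow>
        exp (\<i> * of_real x) * (of_real (x^2/4) * exp (- \<i> * of_real x))"
    by (intro tendsto_intros P_lim)
  have ee: "exp (\<i> * of_real x) * exp (- \<i> * of_real x) = 1"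
    by (simp add: mult_exp_exp)
  have e2: "exp (\<i> * of_real x) * (of_real (x^2/4) * exp (- \<i> * of_real x)) = of_real (x^2/4)"
    by (metis ee mult.commute mult.left_commute mult.right_neutral)
  have e3: "\<And>n. exp (\<i> * of_real x) * (of_nat n * (P n x - exp (- \<i> * of_real x))) = of_nat n * (G n x - 1)"
  proof -
    fix n
    have "exp (\<i> * of_real x) * (of_nat n * (P n x - exp (- \<i> * of_real x)))
       = of_nat n * (exp (\<i> * of_real x) * P n x - exp (\<i> * of_real x) * exp (- \<i> * of_real x))"
      by (simp add: right_diff_distrib mult.left_commute)
    then show "exp (\<i> * of_real x) * (of_nat n * (P n x - exp (- \<i> * of_real x))) = of_nat n * (G n x - 1)"
      unfolding ee G_def .
  qed
  show ?thesis using L unfolding e2 e3 .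
qed


lemma term_eq:
  fixes x :: real assumes x: "x > 0" and mn: "m \<le> n"
  shows "\<i> ^ (n - m) * of_nat (fact (n + (n - m))) /
        (of_nat (fact (n - m) * fact (n - (n - m))) * (2 * complex_of_real x) ^ (n - m))
   = (\<i> ^ n * fact (2*n) / (fact n * (2 * complex_of_real x) ^ n)) * (cc x m * of_real (A n m))"
proof -
  obtain k where n: "n = k + m" using mn le_iff_add by (metis add.commute)
  have k1: "n - m = k" "n + (n - m) = 2*k + m" "n - (n - m) = m" "2*n - m = 2*k+m" "2*n = 2*k + 2*m" using n by auto
  define y where "y = 2 * complex_of_real x"
  have y0: "y \<noteq> 0" using x by (simp add: y_def)
  have pw: "\<i> ^ n * (- 2 * \<i> * of_real x) ^ m = \<i> ^ k * y ^ m"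
  proof -
    have e: "- 2 * \<i> * of_real x = (- \<i>) * y" by (simp add: y_def)
    have "\<i> ^ n * (- 2 * \<i> * of_real x) ^ m = \<i> ^ k * ((\<i> * (- \<i>)) ^ m * y ^ m)"
      unfolding e n power_add power_mult_distrib by (simp only: mult_ac)
    also have "\<dots> = \<i> ^ k * y ^ m" by simp
    finally show ?thesis .
  qed
  have yn: "y ^ n = y ^ k * y ^ m" unfolding n by (simp add: power_add)
  have A: "A n m = fact (2*k+m) * fact n / (fact k * fact (2*k + 2*m))" using mn unfolding A_def k1(1,4,5) by (simp add: add.commute)
  have "(\<i> ^ n * fact (2*n) / (fact n * y ^ n)) * (cc x m * of_real (A n m))
      = (\<i> ^ n * (- 2 * \<i> * of_real x) ^ m) * fact (2*k+m) / (y ^ n * fact m * fact k)"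
    unfolding A cc_def k1(5) by (simp add: field_simps)
  also have "\<dots> = \<i> ^ k * fact (2*k+m) / (fact k * fact m * y ^ k)"
    unfolding pw yn using y0 by (simp add: field_simps)
  finally have R: "(\<i> ^ n * fact (2*n) / (fact n * y ^ n)) * (cc x m * of_real (A n m))
      = \<i> ^ k * fact (2*k+m) / (fact k * fact m * y ^ k)" .
  show ?thesis unfolding y_def[symmetric] R unfolding k1(2) unfolding k1(3) unfolding k1(1) by simp
qed

lemma hank_P: assumes x: "x > 0"
  shows "sph_hankel1 n x = (- \<i>) ^ (n + 1) * exp (\<i> * complex_of_real x) / complex_of_real x *
     ((\<i> ^ n * fact (2*n) / (fact n * (2 * complex_of_real x) ^ n)) * P n x)"
proof -
  have "(\<Sum>k=0..n. \<i> ^ k * of_nat (fact (n + k)) /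
        (of_nat (fact k * fact (n - k)) * (2 * complex_of_real x) ^ k))
      = (\<Sum>m=0..n. \<i> ^ (n - m) * of_nat (fact (n + (n - m))) /
        (of_nat (fact (n - m) * fact (n - (n - m))) * (2 * complex_of_real x) ^ (n - m)))"
    by (subst sum.atLeastAtMost_rev) simp
  also have "\<dots> = (\<Sum>m\<le>n. (\<i> ^ n * fact (2*n) / (fact n * (2 * complex_of_real x) ^ n)) * (cc x m * of_real (A n m)))"
    unfolding atLeast0AtMost by (rule sum.cong[OF refl], rule term_eq[OF x], simp)
  also have "\<dots> = (\<i> ^ n * fact (2*n) / (fact n * (2 * complex_of_real x) ^ n)) * P n x"
    unfolding P_def by (simp add: sum_distrib_left)
  finally show ?thesis unfolding sph_hankel1_def by simp
qed

lemma hank_G: assumes x: "x > 0"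
  shows "sph_hankel1 n x = ((- \<i>) ^ (n + 1) * \<i> ^ n * fact (2*n) / (fact n * 2 ^ n)) * G n x / complex_of_real x ^ (n+1)"
  unfolding hank_P[OF x] G_def using x by (simp add: field_simps power_mult_distrib)

lemma hank_ratio: assumes a: "a > 0" and b: "b > 0"
  shows "sph_hankel1 n a / sph_hankel1 n b = of_real ((b/a)^(n+1)) * (G n a / G n b)"
proof -
  define K :: complex where "K = (- \<i>) ^ (n + 1) * \<i> ^ n * fact (2*n) / (fact n * 2 ^ n)"
  have K0: "K \<noteq> 0" by (simp add: K_def)
  have ha: "sph_hankel1 n a = K * G n a / complex_of_real a ^ (n+1)" unfolding hank_G[OF a] K_def ..
  have hb: "sph_hankel1 n b = K * G n b / complex_of_real b ^ (n+1)" unfolding hank_G[OF b] K_def ..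
  show ?thesis
  proof (cases "G n b = 0")
    case True then show ?thesis unfolding ha hb by simp
  next
    case False
    then show ?thesis unfolding ha hb using K0 a b by (simp add: field_simps power_divide)
  qed
qed


lemma G_to1: "(\<lambda>n. G n x) \<longlonglongrightarrow> 1"
proof -
  have L: "(\<lambda>n. of_nat n * (G n x - 1) * inverse (of_nat n)) \<longlonglongrightarrow> of_real (x^2/4) * 0"
    by (intro tendsto_intros G_lim lim_inverse_n)
  have "(\<lambda>n. G n x - 1) \<longlonglongrightarrow> 0"
  proof (rule Lim_transform_eventually[OF L[simplified]])
    show "\<forall>\<^sub>F n in sequentially. of_nat n * (G n x - 1) * inverse (of_nat n) = G n x - 1"
      using eventually_gt_at_top[of 0] by eventually_elim simp
  qed
  hence "(\<lambda>n. (G n x - 1) + 1) \<longlonglongrightarrow> 0 + 1" by (intro tendsto_intros)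
  thus ?thesis by simp
qed

lemma ratio_lim: "(\<lambda>n. of_nat n * (G n a / G n b - 1)) \<longlonglongrightarrow> of_real ((a^2 - b^2)/4)"
proof -
  have ne: "\<forall>\<^sub>F n in sequentially. G n b \<noteq> 0"
    using tendsto_imp_eventually_ne[OF G_to1[of b]] by simp
  have L: "(\<lambda>n. (of_nat n * (G n a - 1) - of_nat n * (G n b - 1)) / G n b) \<longlonglongrightarrow>
       (of_real (a^2/4) - of_real (b^2/4)) / 1"
    by (intro tendsto_intros G_lim G_to1) simp
  have e: "(of_real (a^2/4) - of_real (b^2/4)) / 1 = (of_real ((a^2 - b^2)/4) :: complex)"
    by (simp add: diff_divide_distrib)
  show ?thesis
  proof (rule Lim_transform_eventually[OF L[unfolded e]])
    show "\<forall>\<^sub>F n in sequentially. (of_nat n * (G n a - 1) - of_nat n * (G n b - 1)) / G n b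
       = of_nat n * (G n a / G n b - 1)"
      using ne by eventually_elim (simp add: field_simps)
  qed
qed

theorem lemmaE5:
  fixes kp ks R R' :: real
  assumes "0 < kp" and "kp < ks" and "0 < R'" and "R' < R"
  shows "\<forall>j\<in>{1, 2::nat}. \<forall>\<^sub>F n in sequentially.
           norm (sph_hankel j n (kp * R) / sph_hankel j n (kp * R')
                 - sph_hankel j n (ks * R) / sph_hankel j n (ks * R'))
           \<le> 14 / 3 * (ks * (ks - kp) / real n) * R * (R - R') * (R' / R) ^ (n + 1)"
proof -
  define q where "q = R' / R"
  define a where "a = kp * R"
  define b where "b = kp * R'"
  define c where "c = ks * R"
  define d where "d = ks * R'"
  define Bc where "Bc = 14 / 3 * ks * (ks - kp) * R * (R - R')"
  define l where "l = ((a^2 - b^2) - (c^2 - d^2))/4"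
  have pos: "a > 0" "b > 0" "c > 0" "d > 0" using assms by (auto simp: a_def b_def c_def d_def)
  have q0: "q \<ge> 0" using assms by (simp add: q_def)
  have qa: "b / a = q" "d / c = q" using assms by (auto simp: q_def a_def b_def c_def d_def)
  define U where "U = (\<lambda>n. G n a / G n b - G n c / G n d)"
  have rat: "\<And>n. sph_hankel1 n a / sph_hankel1 n b - sph_hankel1 n c / sph_hankel1 n d
        = of_real (q^(n+1)) * U n"
    unfolding U_def hank_ratio[OF pos(1,2)] hank_ratio[OF pos(3,4)] qa by (simp add: algebra_simps)
  have LU: "(\<lambda>n. of_nat n * U n) \<longlonglongrightarrow> of_real l"
  proof -
    have "(\<lambda>n. of_nat n * (G n a / G n b - 1) - of_nat n * (G n c / G n d - 1)) \<longlonglongrightarrow>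
          of_real ((a^2 - b^2)/4) - of_real ((c^2 - d^2)/4)"
      by (intro tendsto_intros ratio_lim)
    moreover have "\<And>n. of_nat n * (G n a / G n b - 1) - of_nat n * (G n c / G n d - 1) = of_nat n * U n"
      by (simp add: U_def algebra_simps)
    moreover have "of_real ((a^2 - b^2)/4) - of_real ((c^2 - d^2)/4) = (of_real l :: complex)"
      by (simp add: l_def diff_divide_distrib)
    ultimately show ?thesis by simp
  qed
  have lB: "\<bar>l\<bar> < Bc"
  proof -
    have p: "(a^2 - b^2) - (c^2 - d^2) = - ((ks - kp) * (R - R') * ((ks + kp) * (R + R')))"
      by (simp add: a_def b_def c_def d_def power2_eq_square algebra_simps)
    have l: "l = - ((ks - kp) * (R - R') * ((ks + kp) * (R + R'))) / 4"
      unfolding l_def p ..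
    have uv: "(ks - kp) * (R - R') > 0" using assms by simp
    have m: "(ks + kp) * (R + R') < (2*ks) * (2*R)"
      using assms by (intro mult_strict_mono) auto
    have "(ks - kp) * (R - R') * ((ks + kp) * (R + R')) < (ks - kp) * (R - R') * ((2*ks) * (2*R))"
      using mult_strict_left_mono[OF m uv] .
    moreover have "(ks - kp) * (R - R') * ((ks + kp) * (R + R')) > 0" using uv assms by simp
    moreover have "(ks - kp) * (R - R') * (ks * R) > 0" using uv assms by simp
    moreover have "(ks - kp) * (R - R') * ((2*ks) * (2*R)) = 4 * ((ks - kp) * (R - R') * (ks * R))"
      by (simp add: algebra_simps)
    moreover have "Bc = 14/3 * ((ks - kp) * (R - R') * (ks * R))" by (simp only: Bc_def mult_ac)
    moreover have g: "\<And>X Y::real. X < 4*Y \<Longrightarrow> 0 < X \<Longrightarrow> 0 < Y \<Longrightarrow> \<bar>- X / 4\<bar> < 14/3*Y" by auto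
    ultimately show ?thesis unfolding l by (metis g)
  qed
  have ev: "\<forall>\<^sub>F n in sequentially. norm (of_nat n * U n) < Bc"
    using order_tendstoD(2)[OF tendsto_norm[OF LU]] lB by simp
  have E1: "\<forall>\<^sub>F n in sequentially.
      norm (sph_hankel1 n a / sph_hankel1 n b - sph_hankel1 n c / sph_hankel1 n d)
      \<le> 14 / 3 * (ks * (ks - kp) / real n) * R * (R - R') * q ^ (n + 1)"
    using ev eventually_gt_at_top[of 0]
  proof eventually_elim
    case (elim n)
    have nn: "real n > 0" using elim(2) by simp
    have "norm (sph_hankel1 n a / sph_hankel1 n b - sph_hankel1 n c / sph_hankel1 n d)
        = q^(n+1) * (norm (of_nat n * U n) / real n)"
      unfolding rat using nn q0 by (simp add: norm_mult norm_power)
    also have "\<dots> \<le> q^(n+1) * (Bc / real n)"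
      using elim(1) nn q0 by (intro mult_left_mono divide_right_mono) auto
    also have "\<dots> = 14 / 3 * (ks * (ks - kp) / real n) * R * (R - R') * q ^ (n + 1)"
      by (simp add: Bc_def field_simps)
    finally show ?case .
  qed
  show ?thesis
  proof
    fix j :: nat assume "j \<in> {1, 2}"
    hence j: "j = 1 \<or> j = 2" by auto
    have eqn: "\<And>n. norm (sph_hankel j n (kp * R) / sph_hankel j n (kp * R')
                 - sph_hankel j n (ks * R) / sph_hankel j n (ks * R'))
       = norm (sph_hankel1 n a / sph_hankel1 n b - sph_hankel1 n c / sph_hankel1 n d)"
    proof -
      fix n
      have C: "cnj (sph_hankel1 n a) / cnj (sph_hankel1 n b) - cnj (sph_hankel1 n c) / cnj (sph_hankel1 n d)
          = cnj (sph_hankel1 n a / sph_hankel1 n b - sph_hankel1 n c / sph_hankel1 n d)" by simp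
      from j show "norm (sph_hankel j n (kp * R) / sph_hankel j n (kp * R')
                 - sph_hankel j n (ks * R) / sph_hankel j n (ks * R'))
       = norm (sph_hankel1 n a / sph_hankel1 n b - sph_hankel1 n c / sph_hankel1 n d)"
      proof
        assume "j = 1" then show ?thesis by (simp add: sph_hankel_def a_def b_def c_def d_def)
      next
        assume "j = 2"
        then have "sph_hankel j n (kp * R) / sph_hankel j n (kp * R')
                 - sph_hankel j n (ks * R) / sph_hankel j n (ks * R') =
             cnj (sph_hankel1 n a) / cnj (sph_hankel1 n b) - cnj (sph_hankel1 n c) / cnj (sph_hankel1 n d)"
          by (simp add: sph_hankel_def sph_hankel2_def a_def b_def c_def d_def)
        then show ?thesis unfolding C by (simp only: complex_mod_cnj)
      qed
    qed
    show "\<forall>\<^sub>F n in sequentially.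
           norm (sph_hankel j n (kp * R) / sph_hankel j n (kp * R')
                 - sph_hankel j n (ks * R) / sph_hankel j n (ks * R'))
           \<le> 14 / 3 * (ks * (ks - kp) / real n) * R * (R - R') * (R' / R) ^ (n + 1)"
      using E1 unfolding eqn q_def .
  qed
qed

end
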